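(* Let $\mathcal{H}^S$ and $\mathcal{H}^A$ be $d$-dimensional Hilbert spaces with fixed orthonormal bases $\{|i\rangle\}_{i=0}^{d-1}$, let $|0\rangle^A$ be the first basis vector of $\mathcal{H}^A$, and equip $\mathcal{H}^S\otimes\mathcal{H}^A$ with the product basis. For every state $\rho^S$ on $\mathcal{H}^S$ and every incoherent operation $\Lambda^{SA}$ on $\mathcal{H}^S\otimes\mathcal{H}^A$, \[ \mathcal{L}_C(\rho^S)\ge\mathcal{L}_E\big(\Lambda^{SA}(\rho^S\otimes|0\rangle^A\langle 0|)\big). \]
   Context: A state is incoherent if it is diagonal in the fixed basis. An incoherent operation is a completely positive trace-preserving map $\Lambda(\rho)=\sum_nK_n\rho K_n^\dagger$ with $\sum_nK_n^\dagger K_n=I$ where each $K_n$ maps diagonal (incoherent) operators to diagonal operators under $\delta\mapsto K_n\delta K_n^\dagger$; for $\mathcal{H}^S\otimes\mathcal{H}^A$ the fixed basis is $\{|i\rangle\otimes|j\rangle\}$. The coherence rank $R_C(|\psi\rangle)$ of a pure state is the number of nonzero coefficients in the fixed basis; $\mathcal{L}_C(|\psi\rangle)=\log_2R_C(|\psi\rangle)$; for a state $\rho$, $\mathcal{L}_C(\rho)=\min\sum_ip_i\mathcal{L}_C(|\psi_i\rangle)$ over all pure-state decompositions $\rho=\sum_ip_i|\psi_i\rangle\langle\psi_i|$. For a bipartite pure state $|\psi^{SA}\rangle$ with Schmidt rank $r$, $\mathcal{L}_E(|\psi^{SA}\rangle)=\log_2 r$, and for a bipartite state $\rho^{SA}$,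 $\mathcal{L}_E(\rho^{SA})=\min\sum_ip_i\mathcal{L}_E(|\psi_i^{SA}\rangle)$ over all pure-state decompositions $\rho^{SA}=\sum_ip_i|\psi_i^{SA}\rangle\langle\psi_i^{SA}|$. *)

theory Defs
  imports Complex_Main "Jordan_Normal_Form.Matrix"
begin

text \<open>Finite-dimensional quantum states as complex matrices.
  The system and ancilla have dimension d; the product basis vector
  |i> (x) |j> of the joint space (dimension d*d) has index i*d + j.\<close>

definition adj :: "complex mat \<Rightarrow> complex mat" where
  "adj A = mat (dim_col A) (dim_row A) (\<lambda>(i,j). cnj (A $$ (j,i)))"

definition density :: "nat \<Rightarrow> complex mat \<Rightarrow> bool" where
  "density n \<rho> \<longleftrightarrow> \<rho> \<in> carrier_mat n n \<and> adj \<rho> = \<rho> \<and>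
     (\<forall>v \<in> carrier_vec n. 0 \<le> Re (\<Sum>i<n. \<Sum>j<n. cnj (v $ i) * \<rho> $$ (i,j) * v $ j)) \<and>
     (\<Sum>i<n. \<rho> $$ (i,i)) = 1"

definition unit_vec :: "nat \<Rightarrow> complex vec \<Rightarrow> bool" where
  "unit_vec n v \<longleftrightarrow> v \<in> carrier_vec n \<and> (\<Sum>i<n. (cmod (v $ i))\<^sup>2) = 1"

definition pure_decomp :: "nat \<Rightarrow> complex mat \<Rightarrow> nat \<Rightarrow> (nat \<Rightarrow> real) \<Rightarrow> (nat \<Rightarrow> complex vec) \<Rightarrow> bool" where
  "pure_decomp n \<rho> m p \<psi> \<longleftrightarrow> \<rho> \<in> carrier_mat n n \<and>
     (\<forall>k<m. 0 \<le> p k) \<and> (\<Sum>k<m. p k) = 1 \<and> (\<forall>k<m. unit_vec n (\<psi> k)) \<and>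
     (\<forall>i<n. \<forall>j<n. \<rho> $$ (i,j) = (\<Sum>k<m. complex_of_real (p k) * \<psi> k $ i * cnj (\<psi> k $ j)))"

definition coh_rank :: "nat \<Rightarrow> complex vec \<Rightarrow> nat" where
  "coh_rank n v = card {i. i < n \<and> v $ i \<noteq> 0}"

definition L_C :: "nat \<Rightarrow> complex mat \<Rightarrow> real" where
  "L_C n \<rho> = Inf {(\<Sum>k<m. p k * log 2 (real (coh_rank n (\<psi> k)))) | m p \<psi>. pure_decomp n \<rho> m p \<psi>}"

definition orthonormal_fam :: "nat \<Rightarrow> nat \<Rightarrow> (nat \<Rightarrow> complex vec) \<Rightarrow> bool" where
  "orthonormal_fam d r a \<longleftrightarrow> (\<forall>k<r. a k \<in> carrier_vec d) \<and>
     (\<forall>k<r. \<forall>l<r. (\<Sum>i<d. cnj (a k $ i) * a l $ i) = (if k = l then 1 else 0))"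

definition schmidt_decomp :: "nat \<Rightarrow> complex vec \<Rightarrow> nat \<Rightarrow> (nat \<Rightarrow> real) \<Rightarrow> (nat \<Rightarrow> complex vec) \<Rightarrow> (nat \<Rightarrow> complex vec) \<Rightarrow> bool" where
  "schmidt_decomp d v r lam a b \<longleftrightarrow> (\<forall>k<r. 0 < lam k) \<and> orthonormal_fam d r a \<and> orthonormal_fam d r b \<and>
     (\<forall>i<d. \<forall>j<d. v $ (i * d + j) = (\<Sum>k<r. complex_of_real (lam k) * a k $ i * b k $ j))"

definition schmidt_rank :: "nat \<Rightarrow> complex vec \<Rightarrow> nat" where
  "schmidt_rank d v = (LEAST r. \<exists>lam a b. schmidt_decomp d v r lam a b)"

definition L_E :: "nat \<Rightarrow> complex mat \<Rightarrow> real" where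
  "L_E d \<rho> = Inf {(\<Sum>k<m. p k * log 2 (real (schmidt_rank d (\<psi> k)))) | m p \<psi>. pure_decomp (d * d) \<rho> m p \<psi>}"

definition incoherent_op :: "nat \<Rightarrow> nat \<Rightarrow> (nat \<Rightarrow> complex mat) \<Rightarrow> bool" where
  "incoherent_op n N K \<longleftrightarrow> (\<forall>l<N. K l \<in> carrier_mat n n) \<and>
     (\<forall>i<n. \<forall>j<n. (\<Sum>l<N. (adj (K l) * K l) $$ (i,j)) = (if i = j then 1 else 0)) \<and>
     (\<forall>l<N. \<forall>\<delta> \<in> carrier_mat n n. diagonal_mat \<delta> \<longrightarrow> diagonal_mat (K l * \<delta> * adj (K l)))"

definition apply_kraus :: "nat \<Rightarrow> nat \<Rightarrow> (nat \<Rightarrow> complex mat) \<Rightarrow> complex mat \<Rightarrow> complex mat" where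
  "apply_kraus n N K \<rho> = mat n n (\<lambda>(i,j). \<Sum>l<N. (K l * \<rho> * adj (K l)) $$ (i,j))"

definition tensor_ket0 :: "nat \<Rightarrow> complex mat \<Rightarrow> complex mat" where
  "tensor_ket0 d \<rho> = mat (d * d) (d * d)
     (\<lambda>(r,c). if r mod d = 0 \<and> c mod d = 0 then \<rho> $$ (r div d, c div d) else 0)"

end

theory Submission
  imports Defs "Jordan_Normal_Form.Spectral_Radius" "Jordan_Normal_Form.Schur_Decomposition"
begin


lemma mult_entry:
  assumes "A \<in> carrier_mat n m" "B \<in> carrier_mat m p" "i < n" "j < p"
  shows "(A * B) $$ (i,j) = (\<Sum>k<m. A $$ (i,k) * B $$ (k,j))"
  using assms by (auto simp: scalar_prod_def atLeast0LessThan intro!: sum.cong)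

lemma adj_carrier[simp]: "A \<in> carrier_mat n m \<Longrightarrow> adj A \<in> carrier_mat m n"
  unfolding adj_def by auto

lemma adj_dims[simp]: "dim_row (adj A) = dim_col A" "dim_col (adj A) = dim_row A"
  unfolding adj_def by auto

lemma adj_index[simp]: "i < dim_col A \<Longrightarrow> j < dim_row A \<Longrightarrow> adj A $$ (i,j) = cnj (A $$ (j,i))"
  unfolding adj_def by auto

lemma adj_adj[simp]: "adj (adj A) = A"
  by (rule eq_matI) auto

lemma adj_one[simp]: "adj (1\<^sub>m n) = 1\<^sub>m n"
  by (rule eq_matI) auto

lemma adj_mult:
  assumes "A \<in> carrier_mat n m" "B \<in> carrier_mat m p"
  shows "adj (A * B) = adj B * adj A"
proof (rule eq_matI)
  fix i j assume ij: "i < dim_row (adj B * adj A)" "j < dim_col (adj B * adj A)"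
  then have i: "i < p" and j: "j < n" using assms by auto
  have "adj (A * B) $$ (i,j) = cnj ((A*B) $$ (j,i))" using assms i j by auto
  also have "\<dots> = (\<Sum>k<m. cnj (A $$ (j,k)) * cnj (B $$ (k,i)))"
    using mult_entry[OF assms j i] by (simp add: cnj_sum)
  also have "\<dots> = (\<Sum>k<m. adj B $$ (i,k) * adj A $$ (k,j))"
    using assms i j by (auto intro!: sum.cong)
  also have "\<dots> = (adj B * adj A) $$ (i,j)"
    using mult_entry[of "adj B" p m "adj A" n i j] assms i j by auto
  finally show "adj (A * B) $$ (i,j) = (adj B * adj A) $$ (i,j)" .
qed (use assms in auto)

definition dmat :: "nat \<Rightarrow> (nat \<Rightarrow> real) \<Rightarrow> complex mat" where
  "dmat n \<mu> = mat n n (\<lambda>(i,j). if i = j then complex_of_real (\<mu> i) else 0)"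

lemma dmat_carrier[simp]: "dmat n \<mu> \<in> carrier_mat n n"
  unfolding dmat_def by auto

lemma udu_entry:
  assumes U: "U \<in> carrier_mat n n" and i: "i < n" and j: "j < n"
  shows "(U * dmat n \<mu> * adj U) $$ (i,j) = (\<Sum>k<n. U $$ (i,k) * complex_of_real (\<mu> k) * cnj (U $$ (j,k)))"
proof -
  have "(U * dmat n \<mu> * adj U) $$ (i,j) = (\<Sum>k<n. (U * dmat n \<mu>) $$ (i,k) * adj U $$ (k,j))"
    by (rule mult_entry[of _ n n _ n]) (use U i j in auto)
  also have "\<dots> = (\<Sum>k<n. (U $$ (i,k) * complex_of_real (\<mu> k)) * cnj (U $$ (j,k)))"
  proof (rule sum.cong[OF refl])
    fix k assume k: "k \<in> {..<n}"
    have "(U * dmat n \<mu>) $$ (i,k) = (\<Sum>l<n. U $$ (i,l) * dmat n \<mu> $$ (l,k))"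
      by (rule mult_entry[of _ n n _ n]) (use U i k in auto)
    also have "\<dots> = (\<Sum>l<n. if l = k then U $$ (i,k) * complex_of_real (\<mu> k) else 0)"
      by (rule sum.cong) (use k in \<open>auto simp: dmat_def\<close>)
    also have "\<dots> = U $$ (i,k) * complex_of_real (\<mu> k)" using k by simp
    finally show "(U * dmat n \<mu>) $$ (i,k) * adj U $$ (k,j) = (U $$ (i,k) * complex_of_real (\<mu> k)) * cnj (U $$ (j,k))"
      using U j k by auto
  qed
  finally show ?thesis by simp
qed


lemma cself_real:
  fixes x :: "complex vec"
  shows "x \<bullet>c x = complex_of_real (\<Sum>i<dim_vec x. (cmod (x $ i))\<^sup>2)"
proof -
  have "x \<bullet>c x = (\<Sum>i<dim_vec x. x $ i * cnj (x $ i))"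
    by (simp add: scalar_prod_def atLeast0LessThan)
  also have "\<dots> = complex_of_real (\<Sum>i<dim_vec x. (cmod (x $ i))\<^sup>2)"
    by (simp only: of_real_sum complex_norm_square)
  finally show ?thesis .
qed

lemma spectral_mat:
  "A \<in> carrier_mat n n \<Longrightarrow> adj A = A \<Longrightarrow>
   \<exists>U \<mu>. U \<in> carrier_mat n n \<and> adj U * U = 1\<^sub>m n \<and> U * adj U = 1\<^sub>m n \<and> A = U * dmat n \<mu> * adj U"
proof (induction n arbitrary: A)
  case 0
  show ?case
    by (rule exI[of _ "1\<^sub>m 0"], rule exI[of _ "\<lambda>_. 0"]) (use 0 in \<open>auto intro!: eq_matI\<close>)
next
  case (Suc n A)
  define m where "m = Suc n"
  have A: "A \<in> carrier_mat m m" and hA: "adj A = A" using Suc m_def by auto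
  from spectrum_non_empty[OF A] obtain \<kappa> where "eigenvalue A \<kappa>" unfolding spectrum_def m_def by auto
  then obtain v0 where ev: "eigenvector A v0 \<kappa>" unfolding eigenvalue_def by auto
  hence v0: "v0 \<in> carrier_vec m" "v0 \<noteq> 0\<^sub>v m" "A *\<^sub>v v0 = \<kappa> \<cdot>\<^sub>v v0" using A unfolding eigenvector_def by auto
  interpret cof_vec_space m "TYPE(complex)" .
  define b where "b = basis_completion v0"
  define ws where "ws = gram_schmidt m b"
  from basis_completion[OF v0(1) v0(2), folded b_def]
  have dist_b: "distinct b" and indep: "\<not> lin_dep (set b)" and bc: "set b \<subseteq> carrier_vec m"
    and hdb: "hd b = v0" and len_b: "length b = m" by auto
  from hdb len_b obtain vs where bv: "b = v0 # vs" unfolding m_def by (cases b) auto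
  from gram_schmidt_result[OF bc dist_b indep refl, folded ws_def]
  have ws: "set ws \<subseteq> carrier_vec m" "corthogonal ws" "length ws = m" by (auto simp: len_b)
  have "hd ws = v0" unfolding ws_def bv using v0(1) by simp
  hence ws0: "ws ! 0 = v0" using ws(3) unfolding m_def by (cases ws) auto
  have wsc: "j < m \<Longrightarrow> ws ! j \<in> carrier_vec m" for j using ws by auto
  define r where "r j = (\<Sum>i<m. (cmod (ws ! j $ i))\<^sup>2)" for j
  have rpos: "r j > 0" if j: "j < m" for j
  proof -
    have "ws ! j \<bullet>c ws ! j \<noteq> 0" using corthogonalD[OF ws(2)] j ws(3) by auto
    moreover have "ws ! j \<bullet>c ws ! j = complex_of_real (r j)"
      unfolding cself_real r_def using wsc[OF j] by auto
    moreover have "r j \<ge> 0" unfolding r_def by (auto intro: sum_nonneg)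
    ultimately show ?thesis by auto
  qed
  define nf where "nf j = 1 / sqrt (r j)" for j
  define W where "W = mat m m (\<lambda>(i,j). complex_of_real (nf j) * (ws ! j) $ i)"
  have W: "W \<in> carrier_mat m m" unfolding W_def by auto
  have WW: "adj W * W = 1\<^sub>m m"
  proof (rule eq_matI)
    fix k l assume "k < dim_row (1\<^sub>m m)" "l < dim_col (1\<^sub>m m)"
    hence k: "k < m" and l: "l < m" by auto
    have "(adj W * W) $$ (k,l) = (\<Sum>i<m. adj W $$ (k,i) * W $$ (i,l))"
      by (rule mult_entry[of _ m m _ m]) (use W k l in auto)
    also have "\<dots> = complex_of_real (nf k * nf l) * (\<Sum>i<m. (ws ! l) $ i * cnj ((ws ! k) $ i))"
      unfolding sum_distrib_left using W k l by (auto simp: W_def intro!: sum.cong)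
    also have "(\<Sum>i<m. (ws ! l) $ i * cnj ((ws ! k) $ i)) = ws ! l \<bullet>c ws ! k"
      using wsc[OF k] wsc[OF l] by (simp add: scalar_prod_def atLeast0LessThan)
    also have "complex_of_real (nf k * nf l) * \<dots> = 1\<^sub>m m $$ (k,l)"
    proof (cases "k = l")
      case True
      have "ws ! l \<bullet>c ws ! k = complex_of_real (r k)"
        unfolding cself_real r_def True using wsc[OF k] wsc[OF l] by auto
      moreover have "nf k * nf k * r k = 1" using rpos[OF k] unfolding nf_def
        by (simp add: field_simps)
      ultimately show ?thesis using True k
        by (metis index_one_mat(1) of_real_1 of_real_mult)
    next
      case False
      then have "ws ! l \<bullet>c ws ! k = 0" using corthogonalD[OF ws(2)] k l ws(3) by auto
      then show ?thesis using False k l by simp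
    qed
    finally show "(adj W * W) $$ (k,l) = 1\<^sub>m m $$ (k,l)" .
  qed (use W in auto)
  have WW2: "W * adj W = 1\<^sub>m m"
    by (rule mat_mult_left_right_inverse[OF _ W WW]) (use W in auto)
  have m0: "0 < m" unfolding m_def by auto
  have colW0: "col W 0 = complex_of_real (nf 0) \<cdot>\<^sub>v v0"
    by (rule eq_vecI) (use m0 v0(1) ws0 in \<open>auto simp: W_def\<close>)
  have Aw: "A *\<^sub>v col W 0 = \<kappa> \<cdot>\<^sub>v col W 0"
    unfolding colW0 using mult_mat_vec[OF A v0(1)] v0(3) by (auto simp: smult_smult_assoc mult.commute)
  define B where "B = adj W * A * W"
  have B: "B \<in> carrier_mat m m" unfolding B_def using W A by auto
  have colB: "col B 0 = \<kappa> \<cdot>\<^sub>v col (1\<^sub>m m) 0"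
  proof -
    have "col B 0 = (adj W * A) *\<^sub>v col W 0" unfolding B_def
      by (rule col_mult2[of _ m m]) (use W A m0 in auto)
    also have "\<dots> = adj W *\<^sub>v (\<kappa> \<cdot>\<^sub>v col W 0)"
      using W A Aw by (subst assoc_mult_mat_vec[of _ m m _ m]) auto
    also have "\<dots> = \<kappa> \<cdot>\<^sub>v (adj W *\<^sub>v col W 0)"
      by (rule mult_mat_vec[of _ m m]) (use W in auto)
    also have "adj W *\<^sub>v col W 0 = col (adj W * W) 0"
      by (rule col_mult2[symmetric, of _ m m]) (use W m0 in auto)
    finally show ?thesis unfolding WW .
  qed
  have Bk0: "B $$ (k,0) = (if k = 0 then \<kappa> else 0)" if "k < m" for k
  proof -
    have "B $$ (k,0) = col B 0 $ k" using B that m0 by auto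
    then show ?thesis unfolding colB using that m0 by auto
  qed
  have hB: "adj B = B" unfolding B_def
    using W A hA by (simp add: adj_mult[of _ m m _ m] assoc_mult_mat[of _ m m _ m _ m] mult_carrier_mat[of _ m m])
  have Bherm: "B $$ (i,j) = cnj (B $$ (j,i))" if "i < m" "j < m" for i j
  proof -
    have "B $$ (i,j) = adj B $$ (i,j)" using hB by simp
    also have "\<dots> = cnj (B $$ (j,i))" using B that by auto
    finally show ?thesis .
  qed
  have kreal: "cnj \<kappa> = \<kappa>" using Bherm[OF m0 m0] Bk0[OF m0] by simp
  have "Im \<kappa> = 0" using arg_cong[OF kreal, of Im] by simp
  hence kreal': "complex_of_real (Re \<kappa>) = \<kappa>"
    by (simp add: complex_eq_iff)
  have B0k: "B $$ (0,k) = (if k = 0 then \<kappa> else 0)" if "k < m" for k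
    using Bherm[OF m0 that] Bk0[OF that] kreal by auto
  define B' where "B' = mat n n (\<lambda>(i,j). B $$ (Suc i, Suc j))"
  have B': "B' \<in> carrier_mat n n" unfolding B'_def by auto
  have hB': "adj B' = B'"
  proof (rule eq_matI)
    fix i j assume "i < dim_row B'" "j < dim_col B'"
    hence "i < n" "j < n" using B' by auto
    thus "adj B' $$ (i,j) = B' $$ (i,j)" using Bherm[of "Suc i" "Suc j"] unfolding m_def by (simp add: B'_def)
  qed (use B' in auto)
  from Suc.IH[OF B' hB'] obtain U' \<mu>' where U': "U' \<in> carrier_mat n n" "adj U' * U' = 1\<^sub>m n"
    "B' = U' * dmat n \<mu>' * adj U'" by blast
  define Ut where "Ut = mat m m (\<lambda>(i,j). if i = 0 then (if j = 0 then 1 else 0) else if j = 0 then 0 else U' $$ (i-1, j-1))"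
  define \<mu> where "\<mu> k = (if k = 0 then Re \<kappa> else \<mu>' (k - 1))" for k
  have Ut: "Ut \<in> carrier_mat m m" unfolding Ut_def by auto
  have UtUt: "adj Ut * Ut = 1\<^sub>m m"
  proof (rule eq_matI)
    fix i j assume "i < dim_row (1\<^sub>m m)" "j < dim_col (1\<^sub>m m)"
    hence i: "i < m" and j: "j < m" by auto
    have "(adj Ut * Ut) $$ (i,j) = (\<Sum>k<m. adj Ut $$ (i,k) * Ut $$ (k,j))"
      by (rule mult_entry[of _ m m _ m]) (use Ut i j in auto)
    also have "\<dots> = (\<Sum>k<m. cnj (Ut $$ (k,i)) * Ut $$ (k,j))"
      using Ut i j by (auto intro!: sum.cong)
    also have "\<dots> = 1\<^sub>m m $$ (i,j)"
    proof (cases i)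
      case 0
      then show ?thesis using i j unfolding m_def
        by (cases j) (auto simp: Ut_def m_def sum.lessThan_Suc_shift simp del: sum.lessThan_Suc)
    next
      case (Suc i')
      show ?thesis
      proof (cases j)
        case 0
        then show ?thesis using i j Suc unfolding m_def
          by (auto simp: Ut_def m_def sum.lessThan_Suc_shift simp del: sum.lessThan_Suc)
      next
        case (Suc j')
        have i': "i' < n" and j': "j' < n" using i j \<open>i = Suc i'\<close> Suc unfolding m_def by auto
        have "(\<Sum>k<m. cnj (Ut $$ (k,i)) * Ut $$ (k,j)) = (\<Sum>k<n. cnj (U' $$ (k,i')) * U' $$ (k,j'))"
          using i j \<open>i = Suc i'\<close> Suc unfolding m_def by (auto simp: Ut_def m_def sum.lessThan_Suc_shift simp del: sum.lessThan_Suc)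
        also have "\<dots> = (adj U' * U') $$ (i',j')"
          by (subst mult_entry[of _ n n _ n]) (use U' i' j' in \<open>auto intro!: sum.cong\<close>)
        also have "\<dots> = 1\<^sub>m m $$ (i,j)" unfolding U'(2) using i' j' i j \<open>i = Suc i'\<close> Suc by auto
        finally show ?thesis .
      qed
    qed
    finally show "(adj Ut * Ut) $$ (i,j) = 1\<^sub>m m $$ (i,j)" .
  qed (use Ut in auto)
  have Beq: "B = Ut * dmat m \<mu> * adj Ut"
  proof (rule eq_matI)
    fix i j assume "i < dim_row (Ut * dmat m \<mu> * adj Ut)" "j < dim_col (Ut * dmat m \<mu> * adj Ut)"
    hence i: "i < m" and j: "j < m" using Ut by auto
    have "(Ut * dmat m \<mu> * adj Ut) $$ (i,j) = (\<Sum>k<m. Ut $$ (i,k) * complex_of_real (\<mu> k) * cnj (Ut $$ (j,k)))"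
      by (rule udu_entry[OF Ut i j])
    also have "\<dots> = B $$ (i,j)"
    proof (cases i)
      case 0
      then show ?thesis using i j Bk0 B0k kreal' unfolding m_def
        by (cases j) (auto simp: Ut_def m_def \<mu>_def sum.lessThan_Suc_shift simp del: sum.lessThan_Suc)
    next
      case (Suc i')
      show ?thesis
      proof (cases j)
        case 0
        then show ?thesis using i j Suc Bk0 unfolding m_def
          by (auto simp: Ut_def m_def \<mu>_def sum.lessThan_Suc_shift simp del: sum.lessThan_Suc)
      next
        case (Suc j')
        have i': "i' < n" and j': "j' < n" using i j \<open>i = Suc i'\<close> Suc unfolding m_def by auto
        have "(\<Sum>k<m. Ut $$ (i,k) * complex_of_real (\<mu> k) * cnj (Ut $$ (j,k)))
            = (\<Sum>k<n. U' $$ (i',k) * complex_of_real (\<mu>' k) * cnj (U' $$ (j',k)))"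
          using i j \<open>i = Suc i'\<close> Suc unfolding m_def by (auto simp: Ut_def m_def \<mu>_def sum.lessThan_Suc_shift simp del: sum.lessThan_Suc)
        also have "\<dots> = B' $$ (i',j')" unfolding U'(3) by (rule udu_entry[symmetric, OF U'(1) i' j'])
        also have "\<dots> = B $$ (i,j)" using i' j' \<open>i = Suc i'\<close> Suc by (simp add: B'_def)
        finally show ?thesis .
      qed
    qed
    finally show "B $$ (i,j) = (Ut * dmat m \<mu> * adj Ut) $$ (i,j)" by simp
  qed (use B Ut in auto)
  define U where "U = W * Ut"
  have U: "U \<in> carrier_mat m m" unfolding U_def using W Ut by auto
  have adjU: "adj U = adj Ut * adj W" unfolding U_def by (rule adj_mult[OF W Ut])
  have UU: "adj U * U = 1\<^sub>m m"
  proof -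
    have "adj U * U = (adj Ut * adj W) * (W * Ut)"
      unfolding adjU by (simp add: U_def)
    also have "\<dots> = adj Ut * ((adj W * W) * Ut)"
      using W Ut by (simp add: assoc_mult_mat[of _ m m _ m _ m] mult_carrier_mat[of _ m m])
    also have "\<dots> = 1\<^sub>m m" unfolding WW using Ut UtUt by simp
    finally show ?thesis .
  qed
  have UU2: "U * adj U = 1\<^sub>m m"
    by (rule mat_mult_left_right_inverse[OF _ U UU]) (use U in auto)
  have "A = (W * adj W) * A * (W * adj W)" unfolding WW2 using A by simp
  also have "\<dots> = W * B * adj W" unfolding B_def
    using W A by (simp add: assoc_mult_mat[of _ m m _ m _ m] mult_carrier_mat[of _ m m])
  also have "\<dots> = U * dmat m \<mu> * adj U" unfolding Beq adjU
    using W Ut by (simp add: U_def assoc_mult_mat[of _ m m _ m _ m] mult_carrier_mat[of _ m m])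
  finally have "A = U * dmat m \<mu> * adj U" .
  then show ?case using U UU UU2 unfolding m_def by blast
qed



lemma spectral_fun:
  assumes A: "A \<in> carrier_mat n n" and hA: "adj A = A"
  shows "\<exists>\<mu> u. (\<forall>k<n. u k \<in> carrier_vec n) \<and>
    (\<forall>k<n. \<forall>l<n. (\<Sum>i<n. cnj (u k $ i) * u l $ i) = (if k = l then 1 else 0)) \<and>
    (\<forall>i<n. \<forall>j<n. (\<Sum>k<n. u k $ i * cnj (u k $ j)) = (if i = j then 1 else 0)) \<and>
    (\<forall>i<n. \<forall>j<n. A $$ (i,j) = (\<Sum>k<n. complex_of_real (\<mu> k) * u k $ i * cnj (u k $ j)))"
proof -
  from spectral_mat[OF A hA] obtain U \<mu> where U: "U \<in> carrier_mat n n" "adj U * U = 1\<^sub>m n"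
    "U * adj U = 1\<^sub>m n" "A = U * dmat n \<mu> * adj U" by blast
  define u where "u k = col U k" for k
  have 1: "\<forall>k<n. u k \<in> carrier_vec n" using U unfolding u_def by auto
  have 2: "(\<Sum>i<n. cnj (u k $ i) * u l $ i) = (if k = l then 1 else 0)" if "k < n" "l < n" for k l
  proof -
    have "(\<Sum>i<n. cnj (u k $ i) * u l $ i) = (\<Sum>i<n. adj U $$ (k,i) * U $$ (i,l))"
      using U that by (auto simp: u_def intro!: sum.cong)
    also have "\<dots> = (adj U * U) $$ (k,l)" by (rule mult_entry[symmetric, of _ n n _ n]) (use U that in auto)
    finally show ?thesis using U that by simp
  qed
  have 3: "(\<Sum>k<n. u k $ i * cnj (u k $ j)) = (if i = j then 1 else 0)" if "i < n" "j < n" for i j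
  proof -
    have "(\<Sum>k<n. u k $ i * cnj (u k $ j)) = (\<Sum>k<n. U $$ (i,k) * adj U $$ (k,j))"
      using U that by (auto simp: u_def intro!: sum.cong)
    also have "\<dots> = (U * adj U) $$ (i,j)" by (rule mult_entry[symmetric, of _ n n _ n]) (use U that in auto)
    finally show ?thesis using U that by simp
  qed
  have 4: "A $$ (i,j) = (\<Sum>k<n. complex_of_real (\<mu> k) * u k $ i * cnj (u k $ j))" if "i < n" "j < n" for i j
    unfolding U(4) udu_entry[OF U(1) that] using U that by (auto simp: u_def intro!: sum.cong)
  show ?thesis using 1 2 3 4 by blast
qed

lemma quad_form:
  fixes u :: "nat \<Rightarrow> complex vec"
  assumes on: "\<And>k l. k < n \<Longrightarrow> l < n \<Longrightarrow> (\<Sum>i<n. cnj (u k $ i) * u l $ i) = (if k = l then 1 else 0)"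
    and k: "k < n" and k': "k' < n"
  shows "(\<Sum>i<n. \<Sum>j<n. cnj (u k $ i) * (\<Sum>l<n. complex_of_real (\<mu> l) * u l $ i * cnj (u l $ j)) * u k' $ j)
     = (if k = k' then complex_of_real (\<mu> k) else 0)"
proof -
  have "(\<Sum>i<n. \<Sum>j<n. cnj (u k $ i) * (\<Sum>l<n. complex_of_real (\<mu> l) * u l $ i * cnj (u l $ j)) * u k' $ j)
    = (\<Sum>i<n. \<Sum>j<n. \<Sum>l<n. complex_of_real (\<mu> l) * (cnj (u k $ i) * u l $ i) * (cnj (u l $ j) * u k' $ j))"
    by (simp add: sum_distrib_left sum_distrib_right mult_ac)
  also have "\<dots> = (\<Sum>l<n. complex_of_real (\<mu> l) * (\<Sum>i<n. cnj (u k $ i) * u l $ i) * (\<Sum>j<n. cnj (u l $ j) * u k' $ j))"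
    apply (subst sum.swap)
    apply (subst (2) sum.swap)
    apply (simp add: sum_distrib_left sum_distrib_right mult_ac)
    done
  also have "\<dots> = (\<Sum>l<n. if l = k \<and> l = k' then complex_of_real (\<mu> l) else 0)"
    by (rule sum.cong) (use on k k' in auto)
  also have "\<dots> = (if k = k' then complex_of_real (\<mu> k) else 0)"
    using k k' by (cases "k = k'") auto
  finally show ?thesis .
qed


lemma cnj_mult_self: "cnj z * z = complex_of_real ((cmod z)\<^sup>2)"
  by (metis complex_norm_square mult.commute)

lemma density_decomp:
  assumes "density n \<rho>"
  shows "\<exists>p \<psi>. pure_decomp n \<rho> n p \<psi>"
proof -
  have R: "\<rho> \<in> carrier_mat n n" and h: "adj \<rho> = \<rho>"
    and psd: "\<And>v. v \<in> carrier_vec n \<Longrightarrow> 0 \<le> Re (\<Sum>i<n. \<Sum>j<n. cnj (v $ i) * \<rho> $$ (i,j) * v $ j)"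
    and tr: "(\<Sum>i<n. \<rho> $$ (i,i)) = 1" using assms unfolding density_def by auto
  from spectral_fun[OF R h] obtain \<mu> u where u: "\<forall>k<n. u k \<in> carrier_vec n"
    and on: "\<forall>k<n. \<forall>l<n. (\<Sum>i<n. cnj (u k $ i) * u l $ i) = (if k = l then 1 else 0)"
    and dec: "\<forall>i<n. \<forall>j<n. \<rho> $$ (i,j) = (\<Sum>k<n. complex_of_real (\<mu> k) * u k $ i * cnj (u k $ j))"
    by blast
  have mu_nn: "0 \<le> \<mu> k" if k: "k < n" for k
  proof -
    have "(\<Sum>i<n. \<Sum>j<n. cnj (u k $ i) * \<rho> $$ (i,j) * u k $ j)
      = (\<Sum>i<n. \<Sum>j<n. cnj (u k $ i) * (\<Sum>l<n. complex_of_real (\<mu> l) * u l $ i * cnj (u l $ j)) * u k $ j)"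
      using dec by (auto intro!: sum.cong)
    also have "\<dots> = complex_of_real (\<mu> k)" using quad_form[of n u k k \<mu>] on k by auto
    finally show ?thesis using psd[of "u k"] u k by auto
  qed
  have "1 = (\<Sum>i<n. \<rho> $$ (i,i))" using tr by simp
  also have "\<dots> = (\<Sum>i<n. \<Sum>k<n. complex_of_real (\<mu> k) * (cnj (u k $ i) * u k $ i))"
    using dec by (auto intro!: sum.cong simp: mult_ac)
  also have "\<dots> = (\<Sum>k<n. complex_of_real (\<mu> k) * (\<Sum>i<n. cnj (u k $ i) * u k $ i))"
    by (subst sum.swap) (simp add: sum_distrib_left)
  also have "\<dots> = (\<Sum>k<n. complex_of_real (\<mu> k))"
    using on by (auto intro!: sum.cong)
  finally have "(\<Sum>k<n. \<mu> k) = 1"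
    by (metis of_real_eq_1_iff of_real_sum)
  moreover have "unit_vec n (u k)" if k: "k < n" for k
  proof -
    have "complex_of_real (\<Sum>i<n. (cmod (u k $ i))\<^sup>2) = (\<Sum>i<n. cnj (u k $ i) * u k $ i)"
      by (simp add: of_real_sum cnj_mult_self)
    also have "\<dots> = 1" using on k by auto
    finally show ?thesis unfolding unit_vec_def using u k
      by (metis of_real_eq_1_iff)
  qed
  ultimately have "pure_decomp n \<rho> n \<mu> u"
    unfolding pure_decomp_def using R mu_nn dec by auto
  then show ?thesis by blast
qed



lemma sum3_rot:
  "(\<Sum>i\<in>A. \<Sum>j\<in>B. \<Sum>k\<in>C. f i j k) = (\<Sum>k\<in>C. \<Sum>j\<in>B. \<Sum>i\<in>A. f i j k)"
proof -
  have "(\<Sum>i\<in>A. \<Sum>j\<in>B. \<Sum>k\<in>C. f i j k) = (\<Sum>i\<in>A. \<Sum>k\<in>C. \<Sum>j\<in>B. f i j k)"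
    by (rule sum.cong[OF refl], rule sum.swap)
  also have "\<dots> = (\<Sum>k\<in>C. \<Sum>i\<in>A. \<Sum>j\<in>B. f i j k)" by (rule sum.swap)
  also have "\<dots> = (\<Sum>k\<in>C. \<Sum>j\<in>B. \<Sum>i\<in>A. f i j k)"
    by (rule sum.cong[OF refl], rule sum.swap)
  finally show ?thesis .
qed

lemma sum3_rot2:
  "(\<Sum>i\<in>A. \<Sum>j\<in>B. \<Sum>k\<in>C. f i j k) = (\<Sum>j\<in>B. \<Sum>k\<in>C. \<Sum>i\<in>A. f i j k)"
proof -
  have "(\<Sum>i\<in>A. \<Sum>j\<in>B. \<Sum>k\<in>C. f i j k) = (\<Sum>j\<in>B. \<Sum>i\<in>A. \<Sum>k\<in>C. f i j k)"
    by (rule sum.swap)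
  also have "\<dots> = (\<Sum>j\<in>B. \<Sum>k\<in>C. \<Sum>i\<in>A. f i j k)"
    by (rule sum.cong[OF refl], rule sum.swap)
  finally show ?thesis .
qed

lemma schmidt_bound:
  assumes B: "B \<subseteq> {..<d}"
    and zero: "\<forall>i<d. \<forall>j<d. j \<notin> B \<longrightarrow> v $ (i*d+j) = 0"
  shows "schmidt_rank d v \<le> card B"
proof -
  have finB: "finite B" using B finite_subset by blast
  define s where "s = card B"
  obtain g where g: "bij_betw g {..<s} B"
    using ex_bij_betw_nat_finite[OF finB] unfolding s_def atLeast0LessThan by blast
  define gi where "gi = the_inv_into {..<s} g"
  have gi: "\<And>j. j \<in> B \<Longrightarrow> gi j < s \<and> g (gi j) = j"
    using g unfolding gi_def bij_betw_def
    by (metis f_the_inv_into_f lessThan_iff the_inv_into_into order_refl)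
  have gB: "\<And>t. t < s \<Longrightarrow> g t \<in> B" using g unfolding bij_betw_def by auto
  have gd: "\<And>t. t < s \<Longrightarrow> g t < d" using gB B by auto
  define M where "M i t = v $ (i*d + g t)" for i t
  define H where "H = mat s s (\<lambda>(t,t'). \<Sum>i<d. cnj (M i t) * M i t')"
  have H: "H \<in> carrier_mat s s" unfolding H_def by auto
  have hH: "adj H = H"
    by (rule eq_matI) (auto simp: H_def cnj_sum mult.commute)
  from spectral_fun[OF H hH] obtain \<mu> y where y: "\<forall>k<s. y k \<in> carrier_vec s"
    and on: "\<forall>k<s. \<forall>l<s. (\<Sum>i<s. cnj (y k $ i) * y l $ i) = (if k = l then 1 else 0)"
    and cp: "\<forall>i<s. \<forall>j<s. (\<Sum>k<s. y k $ i * cnj (y k $ j)) = (if i = j then 1 else 0)"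
    and dec: "\<forall>i<s. \<forall>j<s. H $$ (i,j) = (\<Sum>k<s. complex_of_real (\<mu> k) * y k $ i * cnj (y k $ j))"
    by blast
  define z where "z k i = (\<Sum>t<s. M i t * y k $ t)" for k i
  have gram: "(\<Sum>i<d. cnj (z k i) * z l i) = (if k = l then complex_of_real (\<mu> k) else 0)"
    if k: "k < s" and l: "l < s" for k l
  proof -
    have "(\<Sum>i<d. cnj (z k i) * z l i) = (\<Sum>i<d. \<Sum>t<s. \<Sum>t'<s. cnj (y k $ t) * (cnj (M i t) * M i t') * y l $ t')"
      unfolding z_def by (simp add: cnj_sum sum_distrib_left sum_distrib_right mult_ac)
    also have "\<dots> = (\<Sum>t<s. \<Sum>t'<s. \<Sum>i<d. cnj (y k $ t) * (cnj (M i t) * M i t') * y l $ t')"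
      by (rule sum3_rot2)
    also have "\<dots> = (\<Sum>t<s. \<Sum>t'<s. cnj (y k $ t) * (\<Sum>i<d. cnj (M i t) * M i t') * y l $ t')"
      by (simp add: sum_distrib_left sum_distrib_right)
    also have "\<dots> = (\<Sum>t<s. \<Sum>t'<s. cnj (y k $ t) * (\<Sum>m<s. complex_of_real (\<mu> m) * y m $ t * cnj (y m $ t')) * y l $ t')"
      using dec by (auto simp: H_def intro!: sum.cong)
    also have "\<dots> = (if k = l then complex_of_real (\<mu> k) else 0)"
      by (rule quad_form) (use on k l in auto)
    finally show ?thesis .
  qed
  have znorm: "complex_of_real (\<Sum>i<d. (cmod (z k i))\<^sup>2) = complex_of_real (\<mu> k)" if k: "k < s" for k
    using gram[OF k k] by (simp add: of_real_sum cnj_mult_self)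
  hence znorm': "(\<Sum>i<d. (cmod (z k i))\<^sup>2) = \<mu> k" if "k < s" for k
    using that of_real_eq_iff by blast
  have mu_nn: "\<mu> k \<ge> 0" if "k < s" for k
    using znorm'[OF that] by (metis sum_nonneg zero_le_power2)
  have z0: "z k i = 0" if "k < s" "\<mu> k = 0" "i < d" for k i
  proof -
    have "(\<Sum>i<d. (cmod (z k i))\<^sup>2) = 0" using znorm'[OF that(1)] that(2) by simp
    hence "(cmod (z k i))\<^sup>2 = 0" using that(3) by (subst (asm) sum_nonneg_eq_0_iff) auto
    thus ?thesis by simp
  qed
  have recon: "M i t = (\<Sum>k<s. z k i * cnj (y k $ t))" if "t < s" for i t
  proof -
    have "(\<Sum>k<s. z k i * cnj (y k $ t)) = (\<Sum>k<s. \<Sum>t'<s. M i t' * y k $ t' * cnj (y k $ t))"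
      by (simp add: z_def sum_distrib_right)
    also have "\<dots> = (\<Sum>t'<s. \<Sum>k<s. M i t' * y k $ t' * cnj (y k $ t))"
      by (rule sum.swap)
    also have "\<dots> = (\<Sum>t'<s. M i t' * (\<Sum>k<s. y k $ t' * cnj (y k $ t)))"
      by (simp add: sum_distrib_left mult_ac)
    also have "\<dots> = (\<Sum>t'<s. if t' = t then M i t else 0)"
      by (rule sum.cong) (use cp that in auto)
    also have "\<dots> = M i t" using that by simp
    finally show ?thesis by simp
  qed
  define J where "J = {k. k < s \<and> \<mu> k \<noteq> 0}"
  define R where "R = card J"
  have finJ: "finite J" unfolding J_def by auto
  have JR: "R \<le> s" unfolding R_def J_def by (rule order_trans[OF card_mono[of "{..<s}"]]) auto
  obtain h where h: "bij_betw h {..<R} J"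
    using ex_bij_betw_nat_finite[OF finJ] unfolding R_def atLeast0LessThan by blast
  have hJ: "h r < s \<and> \<mu> (h r) > 0" if r: "r < R" for r
  proof -
    have "h r \<in> J" using bij_betw_apply[OF h] r by blast
    hence "h r < s" "\<mu> (h r) \<noteq> 0" unfolding J_def by auto
    thus ?thesis using mu_nn[of "h r"] by linarith
  qed
  have hinj: "h r = h r' \<longleftrightarrow> r = r'" if "r < R" "r' < R" for r r'
    using inj_on_eq_iff[OF bij_betw_imp_inj_on[OF h]] that by blast
  define lam where "lam r = sqrt (\<mu> (h r))" for r
  define a where "a r = vec d (\<lambda>i. z (h r) i / complex_of_real (lam r))" for r
  define b where "b r = vec d (\<lambda>j. if j \<in> B then cnj (y (h r) $ (gi j)) else 0)" for r
  have lampos: "\<And>r. r < R \<Longrightarrow> lam r > 0" using hJ unfolding lam_def by auto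
  have lamsq: "lam r * lam r = \<mu> (h r)" if "r < R" for r
    using hJ[OF that] unfolding lam_def by simp
  have SD: "schmidt_decomp d v R lam a b"
    unfolding schmidt_decomp_def
  proof (intro conjI allI impI)
    show "\<And>k. k < R \<Longrightarrow> 0 < lam k" by (rule lampos)
    show "orthonormal_fam d R a" unfolding orthonormal_fam_def
    proof (intro conjI allI impI)
      fix k l assume k: "k < R" and l: "l < R"
      have "(\<Sum>i<d. cnj (a k $ i) * a l $ i) = (\<Sum>i<d. cnj (z (h k) i) * z (h l) i) / complex_of_real (lam k * lam l)"
        unfolding a_def by (simp add: sum_divide_distrib)
      also have "\<dots> = (if k = l then 1 else 0)"
      proof (cases "k = l")
        case True
        have "(\<Sum>i<d. cnj (z (h k) i) * z (h l) i) = complex_of_real (\<mu> (h k))"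
          using gram[of "h k" "h l"] hJ[OF k] True by simp
        moreover have "\<mu> (h k) \<noteq> 0" using hJ[OF k] by simp
        ultimately show ?thesis using True lamsq[OF k] by simp
      next
        case False
        hence "h k \<noteq> h l" using hinj[OF k l] by simp
        hence "(\<Sum>i<d. cnj (z (h k) i) * z (h l) i) = 0"
          using gram[of "h k" "h l"] hJ[OF k] hJ[OF l] by simp
        thus ?thesis using False by simp
      qed
      finally show "(\<Sum>i<d. cnj (a k $ i) * a l $ i) = (if k = l then 1 else 0)" .
    qed (auto simp: a_def)
    show "orthonormal_fam d R b" unfolding orthonormal_fam_def
    proof (intro conjI allI impI)
      fix k l assume k: "k < R" and l: "l < R"
      have "(\<Sum>j<d. cnj (b k $ j) * b l $ j) = (\<Sum>j<d. if j \<in> B then y (h k) $ (gi j) * cnj (y (h l) $ (gi j)) else 0)"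
        unfolding b_def by (auto intro!: sum.cong)
      also have "\<dots> = (\<Sum>j\<in>B. y (h k) $ (gi j) * cnj (y (h l) $ (gi j)))"
        using B by (simp add: sum.inter_restrict[symmetric] Int_absorb1)
      also have "\<dots> = (\<Sum>t<s. y (h k) $ (gi (g t)) * cnj (y (h l) $ (gi (g t))))"
        by (rule sum.reindex_bij_betw[OF g, symmetric])
      also have "\<dots> = (\<Sum>t<s. y (h k) $ t * cnj (y (h l) $ t))"
        using g unfolding gi_def bij_betw_def by (auto intro!: sum.cong simp: the_inv_into_f_f)
      also have "\<dots> = cnj (\<Sum>t<s. cnj (y (h k) $ t) * y (h l) $ t)"
        by (simp add: cnj_sum mult.commute)
      also have "\<dots> = (if k = l then 1 else 0)"
        using on hJ[OF k] hJ[OF l] hinj[OF k l] by auto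
      finally show "(\<Sum>j<d. cnj (b k $ j) * b l $ j) = (if k = l then 1 else 0)" .
    qed (auto simp: b_def)
    fix i j assume i: "i < d" and j: "j < d"
    show "v $ (i * d + j) = (\<Sum>k<R. complex_of_real (lam k) * a k $ i * b k $ j)"
    proof (cases "j \<in> B")
      case False
      then show ?thesis using zero i j by (simp add: b_def)
    next
      case True
      obtain t where t: "t < s" "g t = j" using gi[OF True] by blast
      have "gi j = t" using t g unfolding gi_def bij_betw_def by (auto simp: the_inv_into_f_f)
      have "v $ (i * d + j) = M i t" unfolding M_def t(2) ..
      also have "\<dots> = (\<Sum>k<s. z k i * cnj (y k $ t))" by (rule recon[OF t(1)])
      also have "\<dots> = (\<Sum>k\<in>J. z k i * cnj (y k $ t))"
        by (rule sum.mono_neutral_right) (use z0 i in \<open>auto simp: J_def\<close>)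
      also have "\<dots> = (\<Sum>r<R. z (h r) i * cnj (y (h r) $ t))"
        by (rule sum.reindex_bij_betw[OF h, symmetric])
      also have "\<dots> = (\<Sum>r<R. complex_of_real (lam r) * a r $ i * b r $ j)"
      proof (rule sum.cong[OF refl])
        fix r assume "r \<in> {..<R}"
        then have "lam r \<noteq> 0" using lampos by force
        then show "z (h r) i * cnj (y (h r) $ t) = complex_of_real (lam r) * a r $ i * b r $ j"
          using i j True \<open>gi j = t\<close> by (simp add: a_def b_def)
      qed
      finally show ?thesis .
    qed
  qed
  have "schmidt_rank d v \<le> R" unfolding schmidt_rank_def by (rule Least_le) (use SD in blast)
  thus ?thesis using JR unfolding s_def by simp
qed



lemma triple_entry:
  assumes A: "A \<in> carrier_mat n n" and B: "B \<in> carrier_mat n n" and C: "C \<in> carrier_mat n n"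
    and i: "i < n" and j: "j < n"
  shows "(A * B * adj C) $$ (i,j) = (\<Sum>a<n. \<Sum>b<n. A $$ (i,a) * B $$ (a,b) * cnj (C $$ (j,b)))"
proof -
  have "(A * B * adj C) $$ (i,j) = (\<Sum>b<n. (A * B) $$ (i,b) * adj C $$ (b,j))"
    by (rule mult_entry[of _ n n _ n]) (use A B C i j in auto)
  also have "\<dots> = (\<Sum>b<n. (\<Sum>a<n. A $$ (i,a) * B $$ (a,b)) * cnj (C $$ (j,b)))"
    by (rule sum.cong[OF refl]) (use A B C i j mult_entry[of A n n B n i] in auto)
  also have "\<dots> = (\<Sum>b<n. \<Sum>a<n. A $$ (i,a) * B $$ (a,b) * cnj (C $$ (j,b)))"
    by (simp add: sum_distrib_right)
  also have "\<dots> = (\<Sum>a<n. \<Sum>b<n. A $$ (i,a) * B $$ (a,b) * cnj (C $$ (j,b)))"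
    by (rule sum.swap)
  finally show ?thesis .
qed

lemma sum_pairs:
  fixes F :: "nat \<Rightarrow> nat \<Rightarrow> 'a::comm_monoid_add"
  shows "(\<Sum>t<m*N. F (t div N) (t mod N)) = (\<Sum>k<m. \<Sum>l<N. F k l)"
proof (cases "N = 0")
  case True then show ?thesis by simp
next
  case False
  have "(\<Sum>t<m*N. F (t div N) (t mod N)) = (\<Sum>k<m. \<Sum>t\<in>{k*N..<k*N+N}. F (t div N) (t mod N))"
    by (rule sum.nat_group[symmetric])
  also have "\<dots> = (\<Sum>k<m. \<Sum>l<N. F k l)"
  proof (rule sum.cong[OF refl])
    fix k
    have "(\<Sum>t\<in>{k*N..<k*N+N}. F (t div N) (t mod N)) = (\<Sum>l\<in>{0..<N}. F ((l + k*N) div N) ((l + k*N) mod N))"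
      using sum.shift_bounds_nat_ivl[of "\<lambda>t. F (t div N) (t mod N)" 0 "k*N" N] by (simp add: add.commute)
    also have "\<dots> = (\<Sum>l<N. F k l)"
      using False by (auto simp: atLeast0LessThan intro!: sum.cong)
    finally show "(\<Sum>t\<in>{k*N..<k*N+N}. F (t div N) (t mod N)) = (\<Sum>l<N. F k l)" .
  qed
  finally show ?thesis .
qed

lemma sum_pad:
  fixes f :: "nat \<Rightarrow> 'a::comm_monoid_add"
  assumes d: "0 < d"
  shows "(\<Sum>a<d*d. if a mod d = 0 then f (a div d) else 0) = (\<Sum>i<d. f i)"
  using sum_pairs[of "\<lambda>i l. if l = 0 then f i else 0" d d] d by simp

lemma log_nat_nonneg: "0 \<le> log 2 (real c)"
  by (cases "c = 0") (auto simp: log_def)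

lemma log_nat_mono: "a \<le> c \<Longrightarrow> log 2 (real a) \<le> log 2 (real c)"
proof (cases "a = 0")
  case True
  then show ?thesis using log_nat_nonneg[of c] by (simp add: log_def)
next
  case False
  assume "a \<le> c"
  then show ?thesis using False by (subst log_le_cancel_iff) auto
qed

lemma kraus_col:
  assumes K: "K \<in> carrier_mat n n"
    and inc: "\<forall>\<delta> \<in> carrier_mat n n. diagonal_mat \<delta> \<longrightarrow> diagonal_mat (K * \<delta> * adj K)"
    and a: "a < n" and x: "x < n" and x': "x' < n"
    and nz: "K $$ (x,a) \<noteq> 0" "K $$ (x',a) \<noteq> 0"
  shows "x = x'"
proof (rule ccontr)
  assume ne: "x \<noteq> x'"
  define \<delta> where "\<delta> = mat n n (\<lambda>(i,j). if i = a \<and> j = a then (1::complex) else 0)"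
  have dc: "\<delta> \<in> carrier_mat n n" unfolding \<delta>_def by auto
  have "diagonal_mat \<delta>" unfolding diagonal_mat_def \<delta>_def by auto
  hence dg: "diagonal_mat (K * \<delta> * adj K)" using inc dc by auto
  have "(K * \<delta> * adj K) $$ (x,x') = (\<Sum>b<n. \<Sum>c<n. K $$ (x,b) * \<delta> $$ (b,c) * cnj (K $$ (x',c)))"
    by (rule triple_entry[OF K dc K x x'])
  also have "\<dots> = (\<Sum>b<n. \<Sum>c<n. if b = a then (if c = a then K $$ (x,a) * cnj (K $$ (x',a)) else 0) else 0)"
    by (rule sum.cong[OF refl], rule sum.cong[OF refl]) (auto simp: \<delta>_def)
  also have "\<dots> = (\<Sum>b<n. if b = a then K $$ (x,a) * cnj (K $$ (x',a)) else 0)"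
    by (rule sum.cong[OF refl]) (use a in auto)
  also have "\<dots> = K $$ (x,a) * cnj (K $$ (x',a))" using a by simp
  finally have "(K * \<delta> * adj K) $$ (x,x') = K $$ (x,a) * cnj (K $$ (x',a))" .
  moreover have "(K * \<delta> * adj K) $$ (x,x') = 0"
    using dg ne x x' K unfolding diagonal_mat_def by auto
  ultimately show False using nz by simp
qed



lemma sum3_rot3:
  "(\<Sum>i\<in>A. \<Sum>j\<in>B. \<Sum>k\<in>C. f i j k) = (\<Sum>k\<in>C. \<Sum>i\<in>A. \<Sum>j\<in>B. f i j k)"
proof -
  have "(\<Sum>i\<in>A. \<Sum>j\<in>B. \<Sum>k\<in>C. f i j k) = (\<Sum>i\<in>A. \<Sum>k\<in>C. \<Sum>j\<in>B. f i j k)"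
    by (rule sum.cong[OF refl], rule sum.swap)
  also have "\<dots> = (\<Sum>k\<in>C. \<Sum>i\<in>A. \<Sum>j\<in>B. f i j k)" by (rule sum.swap)
  finally show ?thesis .
qed

lemma idx_bound:
  fixes \<alpha> \<beta> d :: nat
  assumes "\<alpha> < d" "\<beta> < d"
  shows "\<alpha> * d + \<beta> < d * d"
proof -
  have "Suc \<alpha> * d \<le> d * d" using assms(1) by (intro mult_le_mono1) simp
  thus ?thesis using assms(2) by simp
qed

lemma main_step:
  assumes d: "0 < d" and inc: "incoherent_op (d*d) N K" and pd: "pure_decomp d \<rho> m p \<psi>"
  shows "\<exists>M q \<phi>. pure_decomp (d*d) (apply_kraus (d*d) N K (tensor_ket0 d \<rho>)) M q \<phi> \<and>
     (\<Sum>t<M. q t * log 2 (real (schmidt_rank d (\<phi> t)))) \<le> (\<Sum>k<m. p k * log 2 (real (coh_rank d (\<psi> k))))"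
proof -
  define n where "n = d * d"
  have n0: "0 < n" unfolding n_def using d by simp
  have Kc: "\<And>l. l < N \<Longrightarrow> K l \<in> carrier_mat n n"
    and Kcomp: "\<And>i j. i < n \<Longrightarrow> j < n \<Longrightarrow> (\<Sum>l<N. (adj (K l) * K l) $$ (i,j)) = (if i = j then 1 else 0)"
    and Kinc: "\<And>l. l < N \<Longrightarrow> \<forall>\<delta> \<in> carrier_mat n n. diagonal_mat \<delta> \<longrightarrow> diagonal_mat (K l * \<delta> * adj (K l))"
    using inc unfolding incoherent_op_def n_def by auto
  have \<rho>c: "\<rho> \<in> carrier_mat d d" and pnn: "\<And>k. k < m \<Longrightarrow> 0 \<le> p k" and psum: "(\<Sum>k<m. p k) = 1"
    and uv: "\<And>k. k < m \<Longrightarrow> unit_vec d (\<psi> k)"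
    and \<rho>dec: "\<And>i j. i < d \<Longrightarrow> j < d \<Longrightarrow> \<rho> $$ (i,j) = (\<Sum>k<m. complex_of_real (p k) * \<psi> k $ i * cnj (\<psi> k $ j))"
    using pd unfolding pure_decomp_def by auto
  define \<Phi> where "\<Phi> k a = (if a mod d = 0 then \<psi> k $ (a div d) else 0)" for k a
  define wv where "wv k l x = (\<Sum>a<n. K l $$ (x,a) * \<Phi> k a)" for k l x
  define nw where "nw k l = (\<Sum>x<n. (cmod (wv k l x))\<^sup>2)" for k l
  define q where "q t = p (t div N) * nw (t div N) (t mod N)" for t
  define \<phi>' where "\<phi>' k l = vec n (\<lambda>x. if nw k l = 0 then (if x = 0 then 1 else 0)
      else wv k l x / complex_of_real (sqrt (nw k l)))" for k l
  define \<phi> where "\<phi> t = \<phi>' (t div N) (t mod N)" for t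
  define \<sigma> where "\<sigma> = apply_kraus n N K (tensor_ket0 d \<rho>)"
  have nw_nn: "0 \<le> nw k l" for k l unfolding nw_def by (auto intro: sum_nonneg)
  have wv0: "wv k l x = 0" if "nw k l = 0" "x < n" for k l x
  proof -
    have "(cmod (wv k l x))\<^sup>2 = 0" using that unfolding nw_def by (subst (asm) sum_nonneg_eq_0_iff) auto
    thus ?thesis by simp
  qed
  have nw_sum: "(\<Sum>l<N. nw k l) = 1" if k: "k < m" for k
  proof -
    have "complex_of_real (\<Sum>l<N. nw k l) = (\<Sum>l<N. \<Sum>x<n. cnj (wv k l x) * wv k l x)"
      unfolding nw_def by (simp add: of_real_sum cnj_mult_self)
    also have "\<dots> = (\<Sum>l<N. \<Sum>x<n. \<Sum>a<n. \<Sum>b<n. cnj (\<Phi> k a) * \<Phi> k b * (cnj (K l $$ (x,a)) * K l $$ (x,b)))"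
      unfolding wv_def by (simp add: cnj_sum sum_distrib_left sum_distrib_right mult_ac)
    also have "\<dots> = (\<Sum>l<N. \<Sum>a<n. \<Sum>b<n. \<Sum>x<n. cnj (\<Phi> k a) * \<Phi> k b * (cnj (K l $$ (x,a)) * K l $$ (x,b)))"
      by (rule sum.cong[OF refl], rule sum3_rot2)
    also have "\<dots> = (\<Sum>a<n. \<Sum>b<n. \<Sum>l<N. \<Sum>x<n. cnj (\<Phi> k a) * \<Phi> k b * (cnj (K l $$ (x,a)) * K l $$ (x,b)))"
      by (rule sum3_rot2)
    also have "\<dots> = (\<Sum>a<n. \<Sum>b<n. cnj (\<Phi> k a) * \<Phi> k b * (\<Sum>l<N. (adj (K l) * K l) $$ (a,b)))"
    proof (intro sum.cong refl)
      fix a b assume a: "a \<in> {..<n}" and b: "b \<in> {..<n}"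
      have "(\<Sum>l<N. (adj (K l) * K l) $$ (a,b)) = (\<Sum>l<N. \<Sum>x<n. cnj (K l $$ (x,a)) * K l $$ (x,b))"
      proof (rule sum.cong[OF refl])
        fix l assume l: "l \<in> {..<N}"
        show "(adj (K l) * K l) $$ (a,b) = (\<Sum>x<n. cnj (K l $$ (x,a)) * K l $$ (x,b))"
          using mult_entry[of "adj (K l)" n n "K l" n a b] Kc[of l] l a b by auto
      qed
      then show "(\<Sum>l<N. \<Sum>x<n. cnj (\<Phi> k a) * \<Phi> k b * (cnj (K l $$ (x,a)) * K l $$ (x,b)))
          = cnj (\<Phi> k a) * \<Phi> k b * (\<Sum>l<N. (adj (K l) * K l) $$ (a,b))"
        by (simp add: sum_distrib_left)
    qed
    also have "\<dots> = (\<Sum>a<n. cnj (\<Phi> k a) * \<Phi> k a)"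
    proof (rule sum.cong[OF refl])
      fix a assume a: "a \<in> {..<n}"
      have "(\<Sum>b<n. cnj (\<Phi> k a) * \<Phi> k b * (\<Sum>l<N. (adj (K l) * K l) $$ (a,b)))
          = (\<Sum>b<n. if b = a then cnj (\<Phi> k a) * \<Phi> k a else 0)"
        by (rule sum.cong[OF refl]) (use a Kcomp in auto)
      also have "\<dots> = cnj (\<Phi> k a) * \<Phi> k a" using a by simp
      finally show "(\<Sum>b<n. cnj (\<Phi> k a) * \<Phi> k b * (\<Sum>l<N. (adj (K l) * K l) $$ (a,b))) = cnj (\<Phi> k a) * \<Phi> k a" .
    qed
    also have "\<dots> = (\<Sum>a<d*d. if a mod d = 0 then cnj (\<psi> k $ (a div d)) * \<psi> k $ (a div d) else 0)"
      unfolding n_def \<Phi>_def by (rule sum.cong) auto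
    also have "\<dots> = (\<Sum>i<d. cnj (\<psi> k $ i) * \<psi> k $ i)" by (rule sum_pad[OF d])
    also have "\<dots> = complex_of_real (\<Sum>i<d. (cmod (\<psi> k $ i))\<^sup>2)" by (simp add: of_real_sum cnj_mult_self)
    also have "\<dots> = 1" using uv[OF k] unfolding unit_vec_def by simp
    finally show ?thesis by (metis of_real_eq_1_iff)
  qed
  have \<phi>'_unit: "unit_vec n (\<phi>' k l)" for k l
  proof (cases "nw k l = 0")
    case True
    have "(\<Sum>x<n. (cmod (\<phi>' k l $ x))\<^sup>2) = (\<Sum>x<n. if x = 0 then 1 else 0)"
      by (rule sum.cong) (auto simp: \<phi>'_def True)
    also have "\<dots> = 1" using n0 by simp
    finally show ?thesis unfolding unit_vec_def \<phi>'_def by simp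
  next
    case False
    have pos: "0 < nw k l" using False nw_nn[of k l] by simp
    have "(\<Sum>x<n. (cmod (\<phi>' k l $ x))\<^sup>2) = (\<Sum>x<n. (cmod (wv k l x))\<^sup>2 / nw k l)"
      by (rule sum.cong) (use pos in \<open>auto simp: \<phi>'_def False norm_divide power_divide\<close>)
    also have "\<dots> = 1" using pos unfolding nw_def[symmetric] sum_divide_distrib[symmetric] by simp
    finally show ?thesis unfolding unit_vec_def \<phi>'_def by simp
  qed
  have F3: "complex_of_real (p k * nw k l) * \<phi>' k l $ x * cnj (\<phi>' k l $ y)
      = complex_of_real (p k) * wv k l x * cnj (wv k l y)" if x: "x < n" and y: "y < n" for k l x y
  proof (cases "nw k l = 0")
    case True
    then show ?thesis using wv0[OF True x] by simp
  next
    case False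
    have pos: "0 < nw k l" using False nw_nn[of k l] by simp
    have sq: "complex_of_real (sqrt (nw k l)) * complex_of_real (sqrt (nw k l)) = complex_of_real (nw k l)"
      using pos by (metis less_imp_le of_real_mult real_sqrt_mult_self abs_of_nonneg)
    have ne: "complex_of_real (sqrt (nw k l)) \<noteq> 0" using pos by simp
    show ?thesis using x y False ne sq unfolding \<phi>'_def
      by (simp add: field_simps)
  qed
  have \<rho>'dec: "tensor_ket0 d \<rho> $$ (a,b) = (\<Sum>k<m. complex_of_real (p k) * \<Phi> k a * cnj (\<Phi> k b))"
    if a: "a < n" and b: "b < n" for a b
  proof -
    have ad: "a div d < d" and bd: "b div d < d" using a b d unfolding n_def
      by (auto simp: less_mult_imp_div_less)
    show ?thesis
    proof (cases "a mod d = 0 \<and> b mod d = 0")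
      case True
      then show ?thesis using a b \<rho>dec[OF ad bd] unfolding tensor_ket0_def \<Phi>_def n_def by simp
    next
      case False
      then show ?thesis using a b unfolding tensor_ket0_def \<Phi>_def n_def by auto
    qed
  qed
  have \<rho>'c: "tensor_ket0 d \<rho> \<in> carrier_mat n n" unfolding tensor_ket0_def n_def by auto
  have F4: "\<sigma> $$ (i,j) = (\<Sum>k<m. \<Sum>l<N. complex_of_real (p k) * wv k l i * cnj (wv k l j))"
    if i: "i < n" and j: "j < n" for i j
  proof -
    have "\<sigma> $$ (i,j) = (\<Sum>l<N. (K l * tensor_ket0 d \<rho> * adj (K l)) $$ (i,j))"
      unfolding \<sigma>_def apply_kraus_def using i j by simp
    also have "\<dots> = (\<Sum>l<N. \<Sum>a<n. \<Sum>b<n. K l $$ (i,a) * tensor_ket0 d \<rho> $$ (a,b) * cnj (K l $$ (j,b)))"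
      by (rule sum.cong[OF refl], rule triple_entry[OF _ \<rho>'c _ i j]) (use Kc in auto)
    also have "\<dots> = (\<Sum>l<N. \<Sum>a<n. \<Sum>b<n. \<Sum>k<m. complex_of_real (p k) * (K l $$ (i,a) * \<Phi> k a) * cnj (K l $$ (j,b) * \<Phi> k b))"
      by (intro sum.cong refl) (simp add: \<rho>'dec sum_distrib_left sum_distrib_right mult_ac)
    also have "\<dots> = (\<Sum>l<N. \<Sum>k<m. \<Sum>a<n. \<Sum>b<n. complex_of_real (p k) * (K l $$ (i,a) * \<Phi> k a) * cnj (K l $$ (j,b) * \<Phi> k b))"
      by (rule sum.cong[OF refl], rule sum3_rot3)
    also have "\<dots> = (\<Sum>k<m. \<Sum>l<N. \<Sum>a<n. \<Sum>b<n. complex_of_real (p k) * (K l $$ (i,a) * \<Phi> k a) * cnj (K l $$ (j,b) * \<Phi> k b))"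
      by (rule sum.swap)
    also have "\<dots> = (\<Sum>k<m. \<Sum>l<N. complex_of_real (p k) * wv k l i * cnj (wv k l j))"
      unfolding wv_def by (simp add: cnj_sum sum_distrib_left sum_distrib_right mult_ac)
    finally show ?thesis .
  qed
  have tdiv: "t div N < m" "t mod N < N" if "t < m * N" for t
  proof -
    have "N > 0" using that by (cases N) auto
    then show "t div N < m" "t mod N < N" using that by (auto simp: less_mult_imp_div_less)
  qed
  have PD: "pure_decomp n \<sigma> (m*N) q \<phi>"
    unfolding pure_decomp_def
  proof (intro conjI allI impI)
    show "\<sigma> \<in> carrier_mat n n" unfolding \<sigma>_def apply_kraus_def by auto
    fix t assume t: "t < m * N"
    show "0 \<le> q t" unfolding q_def using pnn[OF tdiv(1)[OF t]] nw_nn by simp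
    show "unit_vec n (\<phi> t)" unfolding \<phi>_def by (rule \<phi>'_unit)
  next
    have "(\<Sum>t<m*N. q t) = (\<Sum>k<m. \<Sum>l<N. p k * nw k l)"
      unfolding q_def by (rule sum_pairs)
    also have "\<dots> = (\<Sum>k<m. p k)"
      by (rule sum.cong[OF refl]) (simp add: sum_distrib_left[symmetric] nw_sum)
    finally show "(\<Sum>t<m*N. q t) = 1" using psum by simp
  next
    fix i j assume i: "i < n" and j: "j < n"
    have "(\<Sum>t<m*N. complex_of_real (q t) * \<phi> t $ i * cnj (\<phi> t $ j))
        = (\<Sum>k<m. \<Sum>l<N. complex_of_real (p k * nw k l) * \<phi>' k l $ i * cnj (\<phi>' k l $ j))"
      unfolding q_def \<phi>_def by (rule sum_pairs)
    also have "\<dots> = (\<Sum>k<m. \<Sum>l<N. complex_of_real (p k) * wv k l i * cnj (wv k l j))"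
      by (intro sum.cong refl) (rule F3[OF i j])
    also have "\<dots> = \<sigma> $$ (i,j)" using F4[OF i j] by simp
    finally show "\<sigma> $$ (i,j) = (\<Sum>t<m*N. complex_of_real (q t) * \<phi> t $ i * cnj (\<phi> t $ j))" by simp
  qed
  have F6: "schmidt_rank d (\<phi>' k l) \<le> coh_rank d (\<psi> k)" if k: "k < m" and l: "l < N" and nz: "nw k l \<noteq> 0" for k l
  proof -
    define S where "S = {i. i < d \<and> \<psi> k $ i \<noteq> 0}"
    define f where "f i = (SOME x. x < n \<and> K l $$ (x, i*d) \<noteq> 0)" for i
    define B where "B = (\<lambda>i. f i mod d) ` S"
    have finS: "finite S" unfolding S_def by auto
    have Bsub: "B \<subseteq> {..<d}" unfolding B_def using d by auto
    have cardB: "card B \<le> card S" unfolding B_def by (rule card_image_le[OF finS])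
    have zero: "\<forall>\<alpha><d. \<forall>\<beta><d. \<beta> \<notin> B \<longrightarrow> \<phi>' k l $ (\<alpha>*d+\<beta>) = 0"
    proof (intro allI impI)
      fix \<alpha> \<beta> assume \<alpha>: "\<alpha> < d" and \<beta>: "\<beta> < d" and nB: "\<beta> \<notin> B"
      define x where "x = \<alpha>*d+\<beta>"
      have xn: "x < n" unfolding x_def n_def by (rule idx_bound[OF \<alpha> \<beta>])
      have xmod: "x mod d = \<beta>" unfolding x_def using \<beta> by simp
      have "wv k l x = 0"
      proof (rule ccontr)
        assume "wv k l x \<noteq> 0"
        then obtain a where a: "a < n" and ka: "K l $$ (x,a) * \<Phi> k a \<noteq> 0"
          unfolding wv_def by (meson lessThan_iff sum.neutral)
        have am: "a mod d = 0" and psi: "\<psi> k $ (a div d) \<noteq> 0" and kxa: "K l $$ (x,a) \<noteq> 0"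
          using ka unfolding \<Phi>_def by (auto split: if_splits)
        define i where "i = a div d"
        have ai: "a = i * d" unfolding i_def using am by (metis div_mult_mod_eq add_0_right)
        have iS: "i \<in> S" unfolding S_def i_def using psi a d unfolding n_def
          by (auto simp: less_mult_imp_div_less)
        have ex: "\<exists>x. x < n \<and> K l $$ (x, i*d) \<noteq> 0" using xn kxa ai by auto
        have fi: "f i < n \<and> K l $$ (f i, i*d) \<noteq> 0" unfolding f_def by (rule someI_ex[OF ex])
        have "x = f i"
          by (rule kraus_col[OF Kc[OF l] Kinc[OF l], of "i*d"]) (use a ai xn fi kxa in auto)
        hence "\<beta> \<in> B" using xmod iS unfolding B_def by auto
        thus False using nB by simp
      qed
      thus "\<phi>' k l $ (\<alpha>*d+\<beta>) = 0" using xn nz unfolding \<phi>'_def x_def by simp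
    qed
    have "schmidt_rank d (\<phi>' k l) \<le> card B" by (rule schmidt_bound[OF Bsub zero])
    also have "\<dots> \<le> coh_rank d (\<psi> k)" using cardB unfolding coh_rank_def S_def by simp
    finally show ?thesis .
  qed
  have "(\<Sum>t<m*N. q t * log 2 (real (schmidt_rank d (\<phi> t))))
      = (\<Sum>k<m. \<Sum>l<N. p k * nw k l * log 2 (real (schmidt_rank d (\<phi>' k l))))"
    unfolding q_def \<phi>_def by (rule sum_pairs)
  also have "\<dots> \<le> (\<Sum>k<m. \<Sum>l<N. p k * nw k l * log 2 (real (coh_rank d (\<psi> k))))"
  proof (intro sum_mono)
    fix k l assume k: "k \<in> {..<m}" and l: "l \<in> {..<N}"
    show "p k * nw k l * log 2 (real (schmidt_rank d (\<phi>' k l))) \<le> p k * nw k l * log 2 (real (coh_rank d (\<psi> k)))"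
    proof (cases "nw k l = 0")
      case True then show ?thesis by simp
    next
      case False
      have "0 \<le> p k * nw k l" using pnn k nw_nn by simp
      then show ?thesis using F6[of k l] k l False log_nat_mono by (simp add: mult_left_mono)
    qed
  qed
  also have "\<dots> = (\<Sum>k<m. p k * log 2 (real (coh_rank d (\<psi> k))))"
  proof (rule sum.cong[OF refl])
    fix k assume k: "k \<in> {..<m}"
    have "(\<Sum>l<N. p k * nw k l * log 2 (real (coh_rank d (\<psi> k))))
        = p k * log 2 (real (coh_rank d (\<psi> k))) * (\<Sum>l<N. nw k l)"
      by (simp add: sum_distrib_left sum_distrib_right mult_ac)
    also have "\<dots> = p k * log 2 (real (coh_rank d (\<psi> k)))" using nw_sum k by simp
    finally show "(\<Sum>l<N. p k * nw k l * log 2 (real (coh_rank d (\<psi> k)))) = p k * log 2 (real (coh_rank d (\<psi> k)))" .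
  qed
  finally have "(\<Sum>t<m*N. q t * log 2 (real (schmidt_rank d (\<phi> t)))) \<le> (\<Sum>k<m. p k * log 2 (real (coh_rank d (\<psi> k))))" .
  with PD show ?thesis unfolding \<sigma>_def n_def by blast
qed


theorem proposition5:
  fixes d N :: nat and \<rho> :: "complex mat" and K :: "nat \<Rightarrow> complex mat"
  assumes "0 < d"
    and "density d \<rho>"
    and "incoherent_op (d * d) N K"
  shows "L_C d \<rho> \<ge> L_E d (apply_kraus (d * d) N K (tensor_ket0 d \<rho>))"
proof -
  define \<sigma> where "\<sigma> = apply_kraus (d * d) N K (tensor_ket0 d \<rho>)"
  define S where "S = {(\<Sum>k<m. p k * log 2 (real (coh_rank d (\<psi> k)))) | m p \<psi>. pure_decomp d \<rho> m p \<psi>}"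
  define T where "T = {(\<Sum>k<m. p k * log 2 (real (schmidt_rank d (\<psi> k)))) | m p \<psi>. pure_decomp (d * d) \<sigma> m p \<psi>}"
  obtain p0 \<psi>0 where "pure_decomp d \<rho> d p0 \<psi>0" using density_decomp[OF assms(2)] by blast
  hence ne: "S \<noteq> {}" unfolding S_def by blast
  have bdd: "bdd_below T"
  proof (rule bdd_belowI)
    fix y assume "y \<in> T"
    then obtain m p \<psi> where y: "y = (\<Sum>k<m. p k * log 2 (real (schmidt_rank d (\<psi> k))))"
      and pd: "pure_decomp (d * d) \<sigma> m p \<psi>" unfolding T_def by blast
    have "\<forall>k<m. 0 \<le> p k" using pd unfolding pure_decomp_def by blast
    then show "0 \<le> y" unfolding y by (auto intro!: sum_nonneg mult_nonneg_nonneg log_nat_nonneg)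
  qed
  have "Inf T \<le> Inf S"
  proof (rule cInf_greatest[OF ne])
    fix x assume "x \<in> S"
    then obtain m p \<psi> where x: "x = (\<Sum>k<m. p k * log 2 (real (coh_rank d (\<psi> k))))"
      and pd: "pure_decomp d \<rho> m p \<psi>" unfolding S_def by blast
    from main_step[OF assms(1) assms(3) pd] obtain M q \<phi> where
      pd2: "pure_decomp (d*d) \<sigma> M q \<phi>"
      and le: "(\<Sum>t<M. q t * log 2 (real (schmidt_rank d (\<phi> t)))) \<le> x"
      unfolding x \<sigma>_def by blast
    have "(\<Sum>t<M. q t * log 2 (real (schmidt_rank d (\<phi> t)))) \<in> T" unfolding T_def using pd2 by blast
    hence "Inf T \<le> (\<Sum>t<M. q t * log 2 (real (schmidt_rank d (\<phi> t))))" by (rule cInf_lower[OF _ bdd])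
    then show "Inf T \<le> x" using le by linarith
  qed
  then show ?thesis unfolding L_C_def L_E_def S_def T_def \<sigma>_def .
qed

end
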